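(* Every finite-dimensional Yetter-Drinfeld module over $H=B(n,w,\gamma)$ contains a standard element.
   Context: $\Bbbk$ is an algebraically closed field of characteristic $0$; $n,w$ positive integers, $\gamma$ a primitive $n$-th root of unity. $H=B(n,w,\gamma)$ is the Hopf algebra generated by $x^{\pm1},g,y$ with relations $xx^{-1}=x^{-1}x=1$, $xg=gx$, $xy=yx$, $yg=\gamma gy$, $y^n=1-x^w=1-g^n$, with $\Delta(x)=x\otimes x$, $\Delta(g)=g\otimes g$, $\Delta(y)=y\otimes g+1\otimes y$, $\varepsilon(x)=\varepsilon(g)=1$, $\varepsilon(y)=0$, $S(x)=x^{-1}$, $S(g)=g^{-1}$, $S(y)=-yg^{-1}$; its group of group-likes is $G(H)=\{g^jx^k\}$. A (left-left) Yetter-Drinfeld module is a left $H$-module, left $H$-comodule $(V,\cdot,\delta)$ with $\delta(h\cdot v)=h_{(1)}v_{(-1)}S(h_{(3)})\otimes h_{(2)}\cdot v_{(0)}$. A nonzero $v\in V$ is a standard element (of type $(\alpha,\beta,h)$) if there are $h\in G(H)$ and $\alpha,\beta\in\Bbbk^*$ with $x\cdot v=\alpha v$, $g\cdot v=\beta v$, $\delta(v)=h\otimes v$. *)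

theory Defs
  imports "HOL-Analysis.Analysis" "HOL-Computational_Algebra.Polynomial"
begin

text \<open>Basis of H: the monomials g^j x^k y^l with j < n, k an integer, l < n,
  indexed by the triple (j,k,l). Elements of H are finitely supported
  coefficient functions idx => 'k; elements of H (x) H and H (x) H (x) H are
  coefficient functions on pairs / triples of indices.\<close>

type_synonym idx = "nat \<times> int \<times> nat"

definition supp :: "('a \<Rightarrow> 'b::zero) \<Rightarrow> 'a set" where
  "supp f = {b. f b \<noteq> 0}"

definition bas :: "'a \<Rightarrow> 'a \<Rightarrow> 'k::zero_neq_one" where
  "bas b = (\<lambda>c. if c = b then 1 else 0)"

text \<open>Normal form of the monomial g^a x^b y^c (arbitrary a, c), using
  g^n = x^w (central) and y^n = 1 - x^w.\<close>
definition nf :: "nat \<Rightarrow> nat \<Rightarrow> nat \<Rightarrow> int \<Rightarrow> nat \<Rightarrow> idx \<Rightarrow> 'k::comm_ring_1" where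
  "nf n w a b c = (\<lambda>t. \<Sum>i\<in>{0..c div n}.
      of_nat ((c div n) choose i) * (-1) ^ i *
      bas (a mod n, b + int w * int (a div n) + int w * int i, c mod n) t)"

text \<open>Product of basis monomials: (g^a x^b y^c)(g^d x^e y^f) = gamma^(cd) g^(a+d) x^(b+e) y^(c+f).\<close>
definition bmul :: "nat \<Rightarrow> nat \<Rightarrow> 'k::comm_ring_1 \<Rightarrow> idx \<Rightarrow> idx \<Rightarrow> idx \<Rightarrow> 'k" where
  "bmul n w \<gamma> p q = (case p of (a, b, c) \<Rightarrow> case q of (d, e, f) \<Rightarrow>
      (\<lambda>t. \<gamma> ^ (c * d) * nf n w (a + d) (b + e) (c + f) t))"

definition hmul :: "nat \<Rightarrow> nat \<Rightarrow> 'k::comm_ring_1 \<Rightarrow> (idx \<Rightarrow> 'k) \<Rightarrow> (idx \<Rightarrow> 'k) \<Rightarrow> idx \<Rightarrow> 'k" where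
  "hmul n w \<gamma> f h = (\<lambda>t. \<Sum>p\<in>supp f. \<Sum>q\<in>supp h. f p * h q * bmul n w \<gamma> p q t)"

primrec hpow :: "nat \<Rightarrow> nat \<Rightarrow> 'k::comm_ring_1 \<Rightarrow> (idx \<Rightarrow> 'k) \<Rightarrow> nat \<Rightarrow> idx \<Rightarrow> 'k" where
  "hpow n w \<gamma> f 0 = nf n w 0 0 0"
| "hpow n w \<gamma> f (Suc m) = hmul n w \<gamma> (hpow n w \<gamma> f m) f"

definition tmul :: "nat \<Rightarrow> nat \<Rightarrow> 'k::comm_ring_1 \<Rightarrow> (idx \<times> idx \<Rightarrow> 'k) \<Rightarrow> (idx \<times> idx \<Rightarrow> 'k)
    \<Rightarrow> idx \<times> idx \<Rightarrow> 'k" where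
  "tmul n w \<gamma> F K = (\<lambda>(t1, t2). \<Sum>p\<in>supp F. \<Sum>q\<in>supp K.
      F p * K q * bmul n w \<gamma> (fst p) (fst q) t1 * bmul n w \<gamma> (snd p) (snd q) t2)"

definition ptens :: "(idx \<Rightarrow> 'k::times) \<Rightarrow> (idx \<Rightarrow> 'k) \<Rightarrow> idx \<times> idx \<Rightarrow> 'k" where
  "ptens f h = (\<lambda>(t1, t2). f t1 * h t2)"

primrec tpow :: "nat \<Rightarrow> nat \<Rightarrow> 'k::comm_ring_1 \<Rightarrow> (idx \<times> idx \<Rightarrow> 'k) \<Rightarrow> nat \<Rightarrow> idx \<times> idx \<Rightarrow> 'k" where
  "tpow n w \<gamma> F 0 = ptens (nf n w 0 0 0) (nf n w 0 0 0)"
| "tpow n w \<gamma> F (Suc m) = tmul n w \<gamma> (tpow n w \<gamma> F m) F"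

definition gE :: "nat \<Rightarrow> nat \<Rightarrow> idx \<Rightarrow> 'k::comm_ring_1" where "gE n w = nf n w 1 0 0"
definition yE :: "nat \<Rightarrow> nat \<Rightarrow> idx \<Rightarrow> 'k::comm_ring_1" where "yE n w = nf n w 0 0 1"
definition xE :: "nat \<Rightarrow> nat \<Rightarrow> int \<Rightarrow> idx \<Rightarrow> 'k::comm_ring_1" where "xE n w k = nf n w 0 k 0"
definition oneE :: "nat \<Rightarrow> nat \<Rightarrow> idx \<Rightarrow> 'k::comm_ring_1" where "oneE n w = nf n w 0 0 0"

text \<open>Comultiplication on basis elements, extended multiplicatively from
  Delta(x) = x (x) x, Delta(g) = g (x) g, Delta(y) = y (x) g + 1 (x) y.\<close>
definition Delta :: "nat \<Rightarrow> nat \<Rightarrow> 'k::comm_ring_1 \<Rightarrow> idx \<Rightarrow> idx \<times> idx \<Rightarrow> 'k" where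
  "Delta n w \<gamma> b = (case b of (j, k, l) \<Rightarrow>
     tmul n w \<gamma>
       (tmul n w \<gamma> (tpow n w \<gamma> (ptens (gE n w) (gE n w)) j)
                   (ptens (xE n w k) (xE n w k)))
       (tpow n w \<gamma> (\<lambda>t. ptens (yE n w) (gE n w) t + ptens (oneE n w) (yE n w) t) l))"

text \<open>(Delta (x) id) o Delta on basis elements.\<close>
definition Delta2 :: "nat \<Rightarrow> nat \<Rightarrow> 'k::comm_ring_1 \<Rightarrow> idx \<Rightarrow> idx \<times> idx \<times> idx \<Rightarrow> 'k" where
  "Delta2 n w \<gamma> b = (\<lambda>(c1, c2, c3). \<Sum>p\<in>supp (Delta n w \<gamma> b).
      Delta n w \<gamma> b p * Delta n w \<gamma> (fst p) (c1, c2) * bas (snd p) c3)"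

definition eps :: "idx \<Rightarrow> 'k::zero_neq_one" where
  "eps b = (case b of (j, k, l) \<Rightarrow> if l = 0 then 1 else 0)"

text \<open>Antipode on basis elements, extended anti-multiplicatively from
  S(x) = x^-1, S(g) = g^-1 = g^(n-1) x^(-w), S(y) = - y g^-1.\<close>
definition ginvE :: "nat \<Rightarrow> nat \<Rightarrow> idx \<Rightarrow> 'k::comm_ring_1" where
  "ginvE n w = nf n w (n - 1) (- int w) 0"

definition Santi :: "nat \<Rightarrow> nat \<Rightarrow> 'k::comm_ring_1 \<Rightarrow> idx \<Rightarrow> idx \<Rightarrow> 'k" where
  "Santi n w \<gamma> b = (case b of (j, k, l) \<Rightarrow>
     hmul n w \<gamma>
       (hmul n w \<gamma> (hpow n w \<gamma> (\<lambda>t. - hmul n w \<gamma> (yE n w) (ginvE n w) t) l) (xE n w (- k)))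
       (hpow n w \<gamma> (ginvE n w) j))"

section \<open>Yetter-Drinfeld modules, on V = 'k^'d (any nonzero finite-dimensional space)\<close>

primrec mpow :: "'k::semiring_1^'d^'d \<Rightarrow> nat \<Rightarrow> 'k^'d^'d" where
  "mpow M 0 = mat 1"
| "mpow M (Suc m) = mpow M m ** M"

definition smat :: "'k::times \<Rightarrow> 'k^'d^'d \<Rightarrow> 'k^'d^'d" where
  "smat c M = (\<chi> i j. c * M $ i $ j)"

definition xpow :: "'k::semiring_1^'d^'d \<Rightarrow> 'k^'d^'d \<Rightarrow> int \<Rightarrow> 'k^'d^'d" where
  "xpow X Xi k = (if k \<ge> 0 then mpow X (nat k) else mpow Xi (nat (- k)))"

definition rho :: "'k::semiring_1^'d^'d \<Rightarrow> 'k^'d^'d \<Rightarrow> 'k^'d^'d \<Rightarrow> 'k^'d^'d \<Rightarrow> idx \<Rightarrow> 'k^'d^'d" where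
  "rho X Xi G Y b = (case b of (j, k, l) \<Rightarrow> mpow G j ** xpow X Xi k ** mpow Y l)"

text \<open>Left H-module: operators X (invertible, inverse Xi), G, Y satisfying
  the defining relations of H.\<close>
definition H_module :: "nat \<Rightarrow> nat \<Rightarrow> 'k::comm_ring_1 \<Rightarrow> 'k^'d^'d \<Rightarrow> 'k^'d^'d \<Rightarrow> 'k^'d^'d \<Rightarrow> 'k^'d^'d \<Rightarrow> bool" where
  "H_module n w \<gamma> X Xi G Y \<longleftrightarrow>
     X ** Xi = mat 1 \<and> Xi ** X = mat 1 \<and> X ** G = G ** X \<and> X ** Y = Y ** X \<and>
     Y ** G = smat \<gamma> (G ** Y) \<and>
     mpow Y n = mat 1 - mpow X w \<and> mpow Y n = mat 1 - mpow G n"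

text \<open>Left H-comodule: delta(v) = sum_b b (x) (D b) v, with D b = 0 for
  all but finitely many basis indices b.\<close>
definition H_comodule :: "nat \<Rightarrow> nat \<Rightarrow> 'k::comm_ring_1 \<Rightarrow> (idx \<Rightarrow> 'k^'d^'d) \<Rightarrow> bool" where
  "H_comodule n w \<gamma> D \<longleftrightarrow>
     finite (supp D) \<and>
     (\<forall>j k l. D (j, k, l) \<noteq> 0 \<longrightarrow> j < n \<and> l < n) \<and>
     (\<forall>c1 c2. (\<Sum>b\<in>supp D. smat (Delta n w \<gamma> b (c1, c2)) (D b)) = D c2 ** D c1) \<and>
     (\<Sum>b\<in>supp D. smat (eps b) (D b)) = mat 1"

text \<open>Yetter-Drinfeld compatibility
  delta(h.v) = h(1) v(-1) S(h(3)) (x) h(2).v(0), for all basis elements h = b.\<close>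
definition YD_compat :: "nat \<Rightarrow> nat \<Rightarrow> 'k::comm_ring_1 \<Rightarrow> 'k^'d^'d \<Rightarrow> 'k^'d^'d \<Rightarrow> 'k^'d^'d \<Rightarrow> 'k^'d^'d
     \<Rightarrow> (idx \<Rightarrow> 'k^'d^'d) \<Rightarrow> bool" where
  "YD_compat n w \<gamma> X Xi G Y D \<longleftrightarrow>
     (\<forall>j k l c. j < n \<longrightarrow> l < n \<longrightarrow>
        D c ** rho X Xi G Y (j, k, l) =
        (\<Sum>e\<in>supp (Delta2 n w \<gamma> (j, k, l)). \<Sum>a\<in>supp D.
           smat (Delta2 n w \<gamma> (j, k, l) e *
                 hmul n w \<gamma> (hmul n w \<gamma> (bas (fst e)) (bas a)) (Santi n w \<gamma> (snd (snd e))) c)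
                (rho X Xi G Y (fst (snd e)) ** D a)))"

definition YD_module :: "nat \<Rightarrow> nat \<Rightarrow> 'k::comm_ring_1 \<Rightarrow> 'k^'d^'d \<Rightarrow> 'k^'d^'d \<Rightarrow> 'k^'d^'d \<Rightarrow> 'k^'d^'d
     \<Rightarrow> (idx \<Rightarrow> 'k^'d^'d) \<Rightarrow> bool" where
  "YD_module n w \<gamma> X Xi G Y D \<longleftrightarrow>
     H_module n w \<gamma> X Xi G Y \<and> H_comodule n w \<gamma> D \<and> YD_compat n w \<gamma> X Xi G Y D"

text \<open>Standard element of type (alpha, beta, h), h = g^j x^k in G(H).\<close>
definition standard_element :: "nat \<Rightarrow> 'k::comm_ring_1^'d^'d \<Rightarrow> 'k^'d^'d \<Rightarrow> (idx \<Rightarrow> 'k^'d^'d) \<Rightarrow> 'k^'d \<Rightarrow> bool" where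
  "standard_element n X G D v \<longleftrightarrow> v \<noteq> 0 \<and>
     (\<exists>\<alpha> \<beta> j k. \<alpha> \<noteq> 0 \<and> \<beta> \<noteq> 0 \<and> j < n \<and>
        X *v v = \<alpha> *s v \<and> G *v v = \<beta> *s v \<and>
        (\<forall>c. D c *v v = (if c = (j, k, 0) then v else 0)))"

end

theory Submission
  imports Defs
begin


lemma nf0: "nf n w a b 0 = bas (a mod n, b + int w * int (a div n), 0)"
  by (simp add: nf_def)

lemma nf_small: "c < n \<Longrightarrow> nf n w a b c = bas (a mod n, b + int w * int (a div n), c)"
  by (simp add: nf_def)

lemma bas_nz: "bas p t \<noteq> 0 \<Longrightarrow> t = p"
  by (simp add: bas_def split: if_splits)

lemma nf_nz: "nf n w a b c t \<noteq> (0::'k::comm_ring_1) \<Longrightarrow> snd (snd t) = c mod n"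
proof -
  assume "nf n w a b c t \<noteq> (0::'k)"
  then obtain i where "bas (a mod n, b + int w * int (a div n) + int w * int i, c mod n) t \<noteq> (0::'k)"
    unfolding nf_def by (metis (no_types, lifting) mult_zero_right sum.neutral)
  then show ?thesis by (auto dest: bas_nz)
qed

lemma supp_bas: "supp (bas p :: _ \<Rightarrow> 'k::zero_neq_one) = {p}"
  by (auto simp: supp_def bas_def)

lemma hmul_bas: "hmul n w \<gamma> (bas p) (bas q) = bmul n w \<gamma> p q"
  unfolding hmul_def supp_bas by (simp add: bas_def)



lemma bmul_gl:
  assumes "n > 0"
  shows "bmul n w \<gamma> (a mod n, b + int w * int (a div n), 0) (d mod n, e + int w * int (d div n), 0)
     = nf n w (a+d) (b+e) 0"
proof -
  have 1: "(a mod n + d mod n) mod n = (a + d) mod n" by (simp add: mod_add_eq)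
  have 2: "(a + d) div n = a div n + d div n + (a mod n + d mod n) div n"
    by (rule div_add1_eq)
  have 3: "b + int w * int (a div n) + (e + int w * int (d div n)) + int w * int ((a mod n + d mod n) div n)
      = b + e + int w * int ((a + d) div n)"
    unfolding 2 by (simp add: distrib_left)
  show ?thesis
    using 3 by (simp add: bmul_def nf0 1 algebra_simps)
qed

lemma hmul_nf0: "n > 0 \<Longrightarrow> hmul n w \<gamma> (nf n w a b 0) (nf n w d e 0) = nf n w (a+d) (b+e) 0"
  by (simp add: nf0 hmul_bas bmul_gl[unfolded nf0])

lemma nf0_shift: "n > 0 \<Longrightarrow> nf n w (a + n*j) b 0 = nf n w a (b + int w * int j) 0"
  by (simp add: nf0 algebra_simps)

lemma hpow_nf0: "n > 0 \<Longrightarrow> hpow n w \<gamma> (nf n w a b 0) m = nf n w (a*m) (b * int m) 0"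
  by (induction m) (simp_all add: hmul_nf0 algebra_simps)

lemma ptens_bas: "ptens (bas p) (bas q) = (bas (p,q) :: _ \<Rightarrow> 'k::{zero_neq_one,mult_zero,monoid_mult})"
  by (auto simp: ptens_def bas_def fun_eq_iff)

lemma tmul_bas: "tmul n w \<gamma> (bas (p1,p2)) (bas (q1,q2)) = ptens (bmul n w \<gamma> p1 q1) (bmul n w \<gamma> p2 q2)"
  unfolding tmul_def supp_bas by (simp add: bas_def ptens_def fun_eq_iff)



lemma tmul_nf0: "n > 0 \<Longrightarrow> tmul n w \<gamma> (ptens (nf n w a b 0) (nf n w a' b' 0)) (ptens (nf n w d e 0) (nf n w d' e' 0))
   = ptens (nf n w (a+d) (b+e) 0) (nf n w (a'+d') (b'+e') 0)"
  by (simp add: nf0 ptens_bas tmul_bas bmul_gl[unfolded nf0])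

lemma tpow_nf0: "n > 0 \<Longrightarrow> tpow n w \<gamma> (ptens (nf n w a b 0) (nf n w a b 0)) m
   = ptens (nf n w (a*m) (b*int m) 0) (nf n w (a*m) (b*int m) 0)"
  by (induction m) (simp_all add: tmul_nf0 algebra_simps)

lemma Delta_gl:
  assumes "n > 0" "j < n"
  shows "Delta n w \<gamma> (j,k,0) = bas ((j,k,0),(j,k,0))"
proof -
  have A: "tpow n w \<gamma> (ptens (gE n w) (gE n w)) j = ptens (nf n w j 0 0) (nf n w j 0 0)"
    using tpow_nf0[OF assms(1), of w \<gamma> 1 0 j] by (simp add: gE_def)
  have B: "tmul n w \<gamma> (ptens (nf n w j 0 0) (nf n w j 0 0)) (ptens (xE n w k) (xE n w k))
     = ptens (nf n w j k 0) (nf n w j k 0)"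
    using tmul_nf0[OF assms(1), of w \<gamma> j 0 j 0 0 k 0 k] by (simp add: xE_def)
  have C: "tmul n w \<gamma> (ptens (nf n w j k 0) (nf n w j k 0)) (ptens (nf n w 0 0 0) (nf n w 0 0 0))
     = ptens (nf n w j k 0) (nf n w j k 0)"
    using tmul_nf0[OF assms(1), of w \<gamma> j k j k 0 0 0 0] by simp
  have "Delta n w \<gamma> (j,k,0) = ptens (nf n w j k 0) (nf n w j k 0)"
    unfolding Delta_def using A B C by simp
  also have "\<dots> = bas ((j,k,0),(j,k,0))" using assms by (simp add: nf0 ptens_bas)
  finally show ?thesis .
qed

lemma Delta2_gl:
  assumes "n > 0" "j < n"
  shows "Delta2 n w \<gamma> (j,k,0) = bas ((j,k,0),(j,k,0),(j,k,0))"
  unfolding Delta2_def Delta_gl[OF assms] supp_bas by (simp add: Delta_gl[OF assms] fun_eq_iff bas_def)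



lemma Santi_gl:
  assumes "n > 0"
  shows "Santi n w \<gamma> (j,k,0) = nf n w ((n-1)*j) (-k - int w * int j) 0"
  using assms unfolding Santi_def ginvE_def xE_def
  by (simp add: hpow_nf0 hmul_nf0 algebra_simps)

lemma conj_gl:
  assumes "n > 0" "j < n" "jh < n"
  shows "hmul n w \<gamma> (hmul n w \<gamma> (bas (j,k,0)) (bas (jh,kh,0))) (Santi n w \<gamma> (j,k,0)) = bas (jh,kh,0)"
proof -
  have e: "bas (i, m, 0) = nf n w i m 0" if "i < n" for i m using that by (simp add: nf0)
  have E1: "j + jh + (n-1)*j = jh + n*j" using assms(1)
    by (cases n) (auto simp: algebra_simps)
  have E2: "k + kh + (-k - int w * int j) = kh - int w * int j" by simp
  have "hmul n w \<gamma> (hmul n w \<gamma> (bas (j,k,0)) (bas (jh,kh,0))) (Santi n w \<gamma> (j,k,0))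
     = nf n w (j + jh + (n-1)*j) (k + kh + (-k - int w * int j)) 0"
    using assms by (simp add: e Santi_gl hmul_nf0)
  also have "\<dots> = nf n w (jh + n*j) (kh - int w * int j) 0" by (simp only: E1 E2)
  also have "\<dots> = bas (jh,kh,0)" using assms by (simp add: nf0_shift nf0)
  finally show ?thesis .
qed



definition homog :: "(idx \<times> idx \<Rightarrow> 'k::zero) \<Rightarrow> nat \<Rightarrow> bool" where
  "homog F L \<longleftrightarrow> (\<forall>c1 c2. F (c1,c2) \<noteq> 0 \<longrightarrow> snd (snd c1) + snd (snd c2) = L)"

lemma nz_mult: "(x::'a::mult_zero) * y \<noteq> 0 \<Longrightarrow> x \<noteq> 0 \<and> y \<noteq> 0"
  by auto

lemma bmul_nz:
  assumes "bmul n w \<gamma> p q t \<noteq> (0::'k::comm_ring_1)"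
  shows "snd (snd t) = (snd (snd p) + snd (snd q)) mod n"
proof -
  obtain a b c d e f where pq: "p = (a,b,c)" "q = (d,e,f)" by (cases p; cases q) auto
  have "nf n w (a+d) (b+e) (c+f) t \<noteq> (0::'k)" using assms pq by (auto simp: bmul_def)
  then show ?thesis using pq by (auto dest!: nf_nz)
qed

lemma homog_tmul:
  assumes F: "homog F L1" and K: "homog K L2" and "L1 + L2 < n"
  shows "homog (tmul n w \<gamma> F K) (L1 + L2)"
  unfolding homog_def
proof (intro allI impI)
  fix c1 c2 assume "tmul n w \<gamma> F K (c1, c2) \<noteq> 0"
  then have "(\<Sum>p\<in>supp F. \<Sum>q\<in>supp K. F p * K q * bmul n w \<gamma> (fst p) (fst q) c1 * bmul n w \<gamma> (snd p) (snd q) c2) \<noteq> 0"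
    by (simp add: tmul_def)
  then obtain p where "(\<Sum>q\<in>supp K. F p * K q * bmul n w \<gamma> (fst p) (fst q) c1 * bmul n w \<gamma> (snd p) (snd q) c2) \<noteq> 0"
    by (meson sum.not_neutral_contains_not_neutral)
  then obtain q where "F p * K q * bmul n w \<gamma> (fst p) (fst q) c1 * bmul n w \<gamma> (snd p) (snd q) c2 \<noteq> 0"
    by (meson sum.not_neutral_contains_not_neutral)
  then have h: "F p \<noteq> 0" "K q \<noteq> 0" "bmul n w \<gamma> (fst p) (fst q) c1 \<noteq> 0" "bmul n w \<gamma> (snd p) (snd q) c2 \<noteq> 0"
    by auto
  obtain p1 p2 q1 q2 where pq: "p = (p1,p2)" "q = (q1,q2)" by (cases p; cases q) auto
  have 1: "snd (snd p1) + snd (snd p2) = L1" using F h(1) pq unfolding homog_def by blast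
  have 2: "snd (snd q1) + snd (snd q2) = L2" using K h(2) pq unfolding homog_def by blast
  have 3: "snd (snd c1) = snd (snd p1) + snd (snd q1)"
    using bmul_nz[OF h(3)] pq 1 2 assms(3) by simp
  have 4: "snd (snd c2) = snd (snd p2) + snd (snd q2)"
    using bmul_nz[OF h(4)] pq 1 2 assms(3) by simp
  show "snd (snd c1) + snd (snd c2) = L1 + L2" using 1 2 3 4 by simp
qed

lemma homog_ptens_nf: "homog (ptens (nf n w a b c) (nf n w a' b' c') :: _ \<Rightarrow> 'k::comm_ring_1) (c mod n + c' mod n)"
  unfolding homog_def ptens_def by (auto dest!: nz_mult nf_nz)



lemma homog_add:
  fixes F K :: "idx \<times> idx \<Rightarrow> 'k::comm_monoid_add"
  assumes "homog F L" "homog K L" shows "homog (\<lambda>t. F t + K t) L"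
  unfolding homog_def
proof (intro allI impI)
  fix c1 c2 assume "F (c1,c2) + K (c1,c2) \<noteq> 0"
  then have "F (c1,c2) \<noteq> 0 \<or> K (c1,c2) \<noteq> 0" by auto
  then show "snd (snd c1) + snd (snd c2) = L" using assms unfolding homog_def by blast
qed

lemma homog_tpow_y:
  "m < n \<Longrightarrow> homog (tpow n w \<gamma> (\<lambda>t. ptens (yE n w) (gE n w) t + ptens (oneE n w) (yE n w) t) m :: _ \<Rightarrow> 'k::comm_ring_1) m"
proof (induction m)
  case 0
  then show ?case using homog_ptens_nf[of n w 0 0 0 0 0 0] by simp
next
  case (Suc m)
  have "homog (\<lambda>t. ptens (yE n w) (gE n w) t + ptens (oneE n w) (yE n w) t :: 'k) 1"
    apply (rule homog_add)
    using homog_ptens_nf[of n w 0 0 1 1 0 0] homog_ptens_nf[of n w 0 0 0 0 0 1] Suc.prems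
    by (simp_all add: yE_def gE_def oneE_def)
  moreover have "homog (tpow n w \<gamma> (\<lambda>t. ptens (yE n w) (gE n w) t + ptens (oneE n w) (yE n w) t) m :: _ \<Rightarrow> 'k) m"
    using Suc by simp
  ultimately show ?case using homog_tmul[of _ m _ 1 n w \<gamma>] Suc.prems by simp
qed

lemma Delta_homog:
  assumes "n > 0" "l < n"
  shows "homog (Delta n w \<gamma> (j,k,l) :: _ \<Rightarrow> 'k::comm_ring_1) l"
proof -
  have "homog (tpow n w \<gamma> (ptens (gE n w) (gE n w)) j :: _ \<Rightarrow> 'k) 0"
    using homog_ptens_nf[of n w "1*j" "0 * int j" 0 "1*j" "0 * int j" 0] tpow_nf0[OF assms(1), of w \<gamma> 1 0 j]
    by (simp add: gE_def)
  moreover have "homog (ptens (xE n w k) (xE n w k) :: _ \<Rightarrow> 'k) 0"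
    using homog_ptens_nf[of n w 0 k 0 0 k 0] by (simp add: xE_def)
  ultimately have "homog (tmul n w \<gamma> (tpow n w \<gamma> (ptens (gE n w) (gE n w)) j) (ptens (xE n w k) (xE n w k)) :: _ \<Rightarrow> 'k) 0"
    using homog_tmul[of _ 0 _ 0 n w \<gamma>] assms by simp
  then show ?thesis unfolding Delta_def
    using homog_tmul[OF _ homog_tpow_y[OF assms(2)], of _ 0] assms by simp
qed



lemma smat_vec: "(smat c M) *v v = c *s (M *v (v::'k::comm_semiring_1^'d::finite))"
  by (simp add: smat_def vec_eq_iff matrix_vector_mult_def sum_distrib_left mult.assoc)

lemma sum_mat_vec: "(sum M S) *v (v::'k::comm_semiring_1^'d::finite) = (\<Sum>a\<in>S. M a *v v)"
  by (induction S rule: infinite_finite_induct) (simp_all add: matrix_vector_mult_add_rdistrib)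

lemma mpow_Suc_left: "mpow A (Suc i) = A ** mpow A i"
proof (induction i)
  case 0 then show ?case by simp
next
  case (Suc i)
  have "mpow A (Suc (Suc i)) = (mpow A (Suc i)) ** A" by simp
  also have "\<dots> = (A ** mpow A i) ** A" using Suc by simp
  also have "\<dots> = A ** (mpow A i ** A)" by (simp add: matrix_mul_assoc)
  finally show ?case by simp
qed

lemma mpow_vec_Suc: "mpow A (Suc i) *v v = A *v (mpow A i *v v)"
  by (simp only: mpow_Suc_left matrix_vector_mul_assoc)

lemma mpow_vec_Suc2: "(mpow A i ** A) *v v = A *v (mpow A i *v v)"
  using mpow_vec_Suc[of A i v] by simp

definition pev :: "'k::field poly \<Rightarrow> 'k^'d::finite^'d \<Rightarrow> 'k^'d \<Rightarrow> 'k^'d" where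
  "pev p A v = (\<Sum>i\<le>degree p. coeff p i *s (mpow A i *v v))"

lemma pev_bound: "degree p \<le> N \<Longrightarrow> pev p A v = (\<Sum>i\<le>N. coeff p i *s (mpow A i *v v))"
  unfolding pev_def
  by (rule sum.mono_neutral_left) (auto simp: coeff_eq_0)

lemma pev_add: "pev (p + q) A v = pev p A v + pev q A v"
proof -
  let ?N = "max (degree p) (degree q)"
  have "pev (p + q) A v = (\<Sum>i\<le>?N. coeff (p+q) i *s (mpow A i *v v))"
    by (rule pev_bound) (simp add: degree_add_le)
  also have "\<dots> = (\<Sum>i\<le>?N. coeff p i *s (mpow A i *v v)) + (\<Sum>i\<le>?N. coeff q i *s (mpow A i *v v))"
    by (simp add: vector_sadd_rdistrib sum.distrib)
  also have "\<dots> = pev p A v + pev q A v"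
    by (simp add: pev_bound[of p "?N"] pev_bound[of q "?N"])
  finally show ?thesis .
qed

lemma pev_smult: "pev (smult c p) A v = c *s pev p A v"
proof -
  have "pev (smult c p) A v = (\<Sum>i\<le>degree p. coeff (smult c p) i *s (mpow A i *v v))"
    by (rule pev_bound) (simp add: degree_smult_le)
  then show ?thesis by (simp add: pev_def vec.scale_sum_right vector_smult_assoc)
qed

lemma pev_pCons0: "pev (pCons 0 p) A v = A *v pev p A v"
proof -
  have "pev (pCons 0 p) A v = (\<Sum>i\<le>Suc (degree p). coeff (pCons 0 p) i *s (mpow A i *v v))"
    by (rule pev_bound) (simp add: degree_pCons_le)
  also have "\<dots> = (\<Sum>i\<le>degree p. coeff p i *s (mpow A (Suc i) *v v))"
    by (simp only: sum.atMost_Suc_shift) simp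
  also have "\<dots> = A *v pev p A v"
    by (simp add: pev_def vec.sum mpow_vec_Suc2 vector_scalar_commute)
  finally show ?thesis .
qed

lemma pev_monom: "pev (monom c i) A v = c *s (mpow A i *v v)"
proof -
  have "pev (monom c i) A v = (\<Sum>k\<le>i. coeff (monom c i) k *s (mpow A k *v v))"
    by (rule pev_bound) (simp add: degree_monom_le)
  also have "\<dots> = (\<Sum>k\<le>i. if k = i then c *s (mpow A k *v v) else 0)"
    by (intro sum.cong) (auto simp: coeff_monom)
  also have "\<dots> = c *s (mpow A i *v v)"
    by simp
  finally show ?thesis .
qed

lemma mpow_in:
  assumes W: "vec.subspace W" and inv: "\<forall>x\<in>W. A *v x \<in> W" and x: "x \<in> W"
  shows "mpow A i *v x \<in> W"
  using x inv by (induction i) (simp_all add: mpow_vec_Suc2)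

lemma pev_in:
  assumes W: "vec.subspace W" and inv: "\<forall>x\<in>W. A *v x \<in> W" and x: "x \<in> W"
  shows "pev p A x \<in> W"
  unfolding pev_def
  by (intro vec.subspace_sum[OF W] vec.subspace_scale[OF W] mpow_in[OF W inv x])

lemma annih_exists:
  fixes A :: "'k::field^'d::finite^'d"
  shows "\<exists>p. p \<noteq> 0 \<and> pev p A w = 0"
proof -
  define d where "d = CARD('d)"
  define f where "f i = mpow A i *v w" for i
  show ?thesis
  proof (cases "inj_on f {..d}")
    case True
    let ?S = "f ` {..d}"
    have cS: "card ?S = Suc d" using True by (simp add: card_image)
    have "vec.dim ?S \<le> vec.dim (UNIV :: ('k^'d) set)" by (rule vec.dim_subset) simp
    also have "\<dots> = d" by (simp add: vec.dim_UNIV card_cart_basis d_def)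
    finally have "vec.dependent ?S" using cS by (intro vec.dependent_biggerset_general) simp
    then obtain u where u: "\<exists>v\<in>?S. u v \<noteq> 0" "(\<Sum>v\<in>?S. u v *s v) = 0"
      using vec.dependent_finite[of ?S] by auto
    define p where "p = (\<Sum>i\<le>d. monom (u (f i)) i)"
    have cp: "coeff p i = (if i \<le> d then u (f i) else 0)" for i
      by (simp add: p_def coeff_sum coeff_monom)
    have dp: "degree p \<le> d"
      unfolding p_def by (intro degree_sum_le) (auto intro: order.trans[OF degree_monom_le])
    obtain i0 where "i0 \<le> d" "u (f i0) \<noteq> 0" using u(1) by auto
    then have "coeff p i0 \<noteq> 0" by (simp add: cp)
    then have "p \<noteq> 0" by auto
    moreover have "pev p A w = 0"
    proof -
      have "pev p A w = (\<Sum>i\<le>d. u (f i) *s f i)"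
        by (simp add: pev_bound[OF dp] cp f_def)
      also have "\<dots> = (\<Sum>v\<in>?S. u v *s v)"
        using sum.reindex[OF True, of "\<lambda>v. u v *s v"] by simp
      finally show ?thesis using u(2) by simp
    qed
    ultimately show ?thesis by blast
  next
    case False
    then obtain i j where ij: "i \<le> d" "j \<le> d" "i \<noteq> j" "f i = f j"
      unfolding inj_on_def by auto
    define p where "p = monom (1::'k) j + smult (-1) (monom 1 i)"
    have "coeff p j = 1" using ij by (simp add: p_def coeff_monom)
    then have "p \<noteq> 0" by auto
    moreover have "pev p A w = 0"
    proof -
      have "pev p A w = pev (monom 1 j) A w + pev (smult (-1) (monom 1 i)) A w"
        by (simp only: p_def pev_add)
      also have "\<dots> = 1 *s (mpow A j *v w) + (-1) *s (1 *s (mpow A i *v w))"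
        by (simp only: pev_smult pev_monom)
      finally show ?thesis using ij(4) by (simp add: f_def)
    qed
    ultimately show ?thesis by blast
  qed
qed

lemma eig_exists:
  fixes A :: "'k::field^'d::finite^'d"
  assumes ac: "\<forall>p::'k poly. degree p > 0 \<longrightarrow> (\<exists>z. poly p z = 0)"
    and W: "vec.subspace W" and inv: "\<forall>x\<in>W. A *v x \<in> W" and w: "w \<in> W" "w \<noteq> 0"
  shows "\<exists>v\<in>W. v \<noteq> 0 \<and> (\<exists>c. A *v v = c *s v)"
proof -
  have main: "p \<noteq> 0 \<Longrightarrow> pev p A w = 0 \<Longrightarrow> \<exists>v\<in>W. v \<noteq> 0 \<and> (\<exists>c. A *v v = c *s v)" for p
  proof (induction "degree p" arbitrary: p rule: less_induct)
    case less
    show ?case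
    proof (cases "degree p = 0")
      case True
      then have "pev p A w = coeff p 0 *s w" by (simp add: pev_def)
      moreover have "coeff p 0 \<noteq> 0" using less.prems(1) True leading_coeff_0_iff[of p] by simp
      ultimately show ?thesis using less.prems(2) w(2) by simp
    next
      case False
      then obtain z where "poly p z = 0" using ac by auto
      then obtain q where pq: "p = [:-z, 1:] * q" by (auto simp: poly_eq_0_iff_dvd elim: dvdE)
      have q0: "q \<noteq> 0" using less.prems(1) pq by auto
      have "degree p = degree [:-z, 1:] + degree q"
        unfolding pq by (rule degree_mult_eq) (use q0 in auto)
      then have dq: "degree q < degree p" by simp
      have e0: "p = smult (-z) q + pCons 0 q" using pq by (simp add: mult_pCons_left)
      have "pev p A w = pev (smult (-z) q) A w + pev (pCons 0 q) A w"
        by (simp only: e0 pev_add)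
      then have "pev p A w = (-z) *s pev q A w + A *v pev q A w"
        by (simp only: pev_smult pev_pCons0)
      then have e: "A *v pev q A w = z *s pev q A w" using less.prems(2)
        by (simp add: algebra_simps)
      show ?thesis
      proof (cases "pev q A w = 0")
        case True
        then show ?thesis using less.hyps[OF dq q0] by blast
      next
        case False
        then show ?thesis using e pev_in[OF W inv w(1)] by blast
      qed
    qed
  qed
  obtain p where "p \<noteq> 0" "pev p A w = 0" using annih_exists by blast
  then show ?thesis using main by blast
qed



lemma smat_zero: "smat 0 M = (0 :: 'k::comm_ring_1^'d::finite^'d)"
  by (simp add: smat_def vec_eq_iff)

lemma comod_supp:
  assumes "H_comodule n w \<gamma> D" "D b \<noteq> 0"
  shows "fst b < n \<and> snd (snd b) < n"
  using assms unfolding H_comodule_def by (cases b) auto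

lemma mpow_eig:
  fixes G :: "'k::field^'d::finite^'d"
  assumes "G *v v = c *s v" shows "mpow G i *v v = c ^ i *s v"
proof (induction i)
  case 0 then show ?case by simp
next
  case (Suc i)
  have "mpow G (Suc i) *v v = G *v (mpow G i *v v)" by (rule mpow_vec_Suc)
  also have "\<dots> = c ^ i *s (G *v v)" using Suc by (simp only: vec.scale)
  also have "\<dots> = c ^ Suc i *s v" using assms by (simp add: vector_smult_assoc mult.commute)
  finally show ?case .
qed

lemma group_like_inv:
  fixes D :: "idx \<Rightarrow> 'k::field^'d::finite^'d"
  assumes n: "n > 0" and YD: "YD_compat n w \<gamma> X Xi G Y D" and fin: "finite (supp D)"
    and hD: "h \<in> supp D" and h: "h = (jh, kh, 0)" "jh < n"
    and u: "\<forall>c. D c *v u = (if c = h then u else 0)"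
    and b: "j < n"
  shows "\<forall>c. D c *v (rho X Xi G Y (j,k,0) *v u) = (if c = h then rho X Xi G Y (j,k,0) *v u else 0)"
proof
  fix c
  let ?b = "(j,k,0) :: idx"
  let ?R = "rho X Xi G Y ?b"
  let ?co = "\<lambda>a. hmul n w \<gamma> (hmul n w \<gamma> (bas ?b) (bas a)) (Santi n w \<gamma> ?b) c"
  have "D c ** ?R = (\<Sum>e\<in>supp (Delta2 n w \<gamma> ?b). \<Sum>a\<in>supp D.
           smat (Delta2 n w \<gamma> ?b e * hmul n w \<gamma> (hmul n w \<gamma> (bas (fst e)) (bas a)) (Santi n w \<gamma> (snd (snd e))) c)
                (rho X Xi G Y (fst (snd e)) ** D a))"
    using YD b unfolding YD_compat_def by blast
  also have "\<dots> = (\<Sum>a\<in>supp D. smat (?co a) (?R ** D a))"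
    unfolding Delta2_gl[OF n b] supp_bas by (simp add: bas_def)
  finally have e: "D c ** ?R = (\<Sum>a\<in>supp D. smat (?co a) (?R ** D a))" .
  have "D c *v (?R *v u) = (\<Sum>a\<in>supp D. ?co a *s (?R *v (D a *v u)))"
    by (simp add: matrix_vector_mul_assoc e sum_mat_vec smat_vec)
  also have "\<dots> = (\<Sum>a\<in>supp D. if a = h then ?co h *s (?R *v u) else 0)"
    by (intro sum.cong) (auto simp: u)
  also have "\<dots> = ?co h *s (?R *v u)" using hD fin by (simp add: sum.delta)
  also have "?co h = (if c = h then 1 else 0)"
    using conj_gl[OF n b h(2), of w \<gamma> k kh] h by (simp add: bas_def)
  finally show "D c *v (?R *v u) = (if c = h then ?R *v u else 0)" by simp
qed



theorem lemma3p3: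
  fixes n w :: nat and \<gamma> :: "'k::field_char_0"
    and X Xi G Y :: "'k^'d::finite^'d" and D :: "idx \<Rightarrow> 'k^'d^'d"
  assumes alg_closed: "\<forall>p :: 'k poly. degree p > 0 \<longrightarrow> (\<exists>z. poly p z = 0)"
    and "n > 0" and "w > 0"
    and "\<gamma> ^ n = 1" and "\<forall>m. 0 < m \<and> m < n \<longrightarrow> \<gamma> ^ m \<noteq> 1"
    and "YD_module n w \<gamma> X Xi G Y D"
  shows "\<exists>v. standard_element n X G D v"
proof -
  note n = \<open>n > 0\<close>
  have Hm: "H_module n w \<gamma> X Xi G Y" and Hc: "H_comodule n w \<gamma> D" and YD: "YD_compat n w \<gamma> X Xi G Y D"
    using assms(6) unfolding YD_module_def by auto
  have fin: "finite (supp D)" using Hc unfolding H_comodule_def by auto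
  have coass: "\<And>c1 c2. (\<Sum>b\<in>supp D. smat (Delta n w \<gamma> b (c1, c2)) (D b)) = D c2 ** D c1"
    using Hc unfolding H_comodule_def by auto
  have counit: "(\<Sum>b\<in>supp D. smat (eps b) (D b)) = mat 1"
    using Hc unfolding H_comodule_def by auto
  have suppD: "fst b < n \<and> snd (snd b) < n" if "b \<in> supp D" for b
    using comod_supp[OF Hc] that by (auto simp: supp_def)
  have mat1: "mat 1 \<noteq> (0 :: 'k^'d^'d)" by (simp add: vec_eq_iff mat_def)
  have ne: "supp D \<noteq> {}" using counit mat1 by auto
  define l where "l b = snd (snd b)" for b :: idx
  define m where "m = Max (l ` supp D)"
  have "m \<in> l ` supp D" unfolding m_def by (rule Max_in) (use fin ne in auto)
  then obtain c1 where c1: "c1 \<in> supp D" "l c1 = m" by auto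
  have lmax: "l b \<le> m" if "b \<in> supp D" for b
    using fin that unfolding m_def by auto
  have kill: "D c2 ** D c1 = 0" if "l c2 \<ge> 1" for c2
  proof -
    have "(\<Sum>b\<in>supp D. smat (Delta n w \<gamma> b (c1, c2)) (D b)) = (\<Sum>b\<in>supp D. 0)"
    proof (intro sum.cong refl)
      fix b assume b: "b \<in> supp D"
      obtain j k lb where bb: "b = (j,k,lb)" by (cases b) auto
      have "lb < n" using suppD[OF b] bb by simp
      have "Delta n w \<gamma> b (c1, c2) = 0"
      proof (rule ccontr)
        assume nz: "Delta n w \<gamma> b (c1, c2) \<noteq> 0"
        have "homog (Delta n w \<gamma> b) lb" using Delta_homog[OF n \<open>lb < n\<close>, of w \<gamma> j k] bb by simp
        then have "l c1 + l c2 = lb"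
          using nz unfolding homog_def l_def by blast
        then show False using lmax[OF b] bb c1(2) that unfolding l_def by simp
      qed
      then show "smat (Delta n w \<gamma> b (c1, c2)) (D b) = 0" by (simp add: smat_zero)
    qed
    then show ?thesis using coass[of c1 c2] by simp
  qed
  have "D c1 \<noteq> 0" using c1(1) by (simp add: supp_def)
  then obtain u where u: "D c1 *v u \<noteq> 0" using matrix_eq[of "D c1" 0] by auto
  define v0 where "v0 = D c1 *v u"
  have v0: "v0 \<noteq> 0" using u v0_def by simp
  have kill_v0: "D c2 *v v0 = 0" if "l c2 \<ge> 1" for c2
    using kill[OF that] unfolding v0_def by (simp add: matrix_vector_mul_assoc)
  have "v0 = (\<Sum>b\<in>supp D. smat (eps b) (D b)) *v v0" using counit by simp
  also have "\<dots> = (\<Sum>b\<in>supp D. eps b *s (D b *v v0))" by (simp add: sum_mat_vec smat_vec)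
  finally have "(\<Sum>b\<in>supp D. eps b *s (D b *v v0)) \<noteq> 0" using v0 by simp
  then obtain h where h: "h \<in> supp D" "eps h *s (D h *v v0) \<noteq> 0"
    by (meson sum.not_neutral_contains_not_neutral)
  obtain jh kh lh where hh: "h = (jh,kh,lh)" by (cases h) auto
  have lh: "lh = 0" using h(2) hh by (auto simp: eps_def split: if_splits)
  have jh: "jh < n" using suppD[OF h(1)] hh by simp
  define u0 where "u0 = D h *v v0"
  have u0: "u0 \<noteq> 0" using h(2) u0_def by auto
  have u0U: "D c *v u0 = (if c = h then u0 else 0)" for c
  proof -
    have "D c *v u0 = (\<Sum>b\<in>supp D. smat (Delta n w \<gamma> b (h, c)) (D b)) *v v0"
      by (simp add: coass u0_def matrix_vector_mul_assoc)
    also have "\<dots> = (\<Sum>b\<in>supp D. Delta n w \<gamma> b (h, c) *s (D b *v v0))"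
      by (simp add: sum_mat_vec smat_vec)
    also have "\<dots> = (\<Sum>b\<in>supp D. if b = h then (if c = h then u0 else 0) else 0)"
    proof (intro sum.cong refl)
      fix b assume b: "b \<in> supp D"
      obtain j k lb where bb: "b = (j,k,lb)" by (cases b) auto
      show "Delta n w \<gamma> b (h, c) *s (D b *v v0) = (if b = h then (if c = h then u0 else 0) else 0)"
      proof (cases "lb = 0")
        case True
        have "j < n" using suppD[OF b] bb by simp
        then show ?thesis using bb True by (auto simp: Delta_gl[OF n] bas_def u0_def)
      next
        case False
        then have "D b *v v0 = 0" using kill_v0[of b] bb unfolding l_def by simp
        moreover have "b \<noteq> h" using False bb hh lh by auto
        ultimately show ?thesis by simp
      qed
    qed
    also have "\<dots> = (if c = h then u0 else 0)" using h(1) fin by (simp add: sum.delta)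
    finally show ?thesis .
  qed
  define U where "U = {x. \<forall>c. D c *v x = (if c = h then x else 0)}"
  have U_sub: "vec.subspace U"
    unfolding vec.subspace_def U_def
    by (auto simp: matrix_vector_right_distrib vector_scalar_commute)
  have u0U': "u0 \<in> U" using u0U unfolding U_def by auto
  have h': "h = (jh, kh, 0)" using hh lh by simp
  have rho_inv: "\<forall>x\<in>U. rho X Xi G Y (j,k,0) *v x \<in> U" if "j < n" for j k
    using group_like_inv[OF n YD fin h(1) h' jh _ that] unfolding U_def by blast
  have rhoX: "rho X Xi G Y (0,1,0) = X" by (simp add: rho_def xpow_def)
  have rhoG: "rho X Xi G Y (1,0,0) = G" by (simp add: rho_def xpow_def)
  have X_inv: "\<forall>x\<in>U. X *v x \<in> U" using rho_inv[OF n, of 1] rhoX by simp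
  have GX: "mpow G n = mpow X w"
    using Hm unfolding H_module_def by (metis diff_left_imp_eq)
  have G_inv: "\<forall>x\<in>U. G *v x \<in> U"
  proof (cases "n = 1")
    case True
    then have "G = mpow X w" using GX by simp
    then show ?thesis using mpow_in[OF U_sub X_inv] by simp
  next
    case False
    then have "1 < n" using n by simp
    then show ?thesis using rho_inv[of 1 0] rhoG by simp
  qed
  obtain v1 \<alpha> where v1: "v1 \<in> U" "v1 \<noteq> 0" "X *v v1 = \<alpha> *s v1"
    using eig_exists[OF alg_closed U_sub X_inv u0U' u0] by blast
  define W where "W = U \<inter> {x. X *v x = \<alpha> *s x}"
  have W_sub: "vec.subspace W"
    unfolding W_def using U_sub unfolding vec.subspace_def
    by (auto simp: matrix_vector_right_distrib vector_scalar_commute vector_sadd_rdistrib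
        vec.scale_right_distrib)
  have XG: "X ** G = G ** X" using Hm unfolding H_module_def by auto
  have W_inv: "\<forall>x\<in>W. G *v x \<in> W"
  proof
    fix x assume x: "x \<in> W"
    have "X *v (G *v x) = G *v (X *v x)" by (simp add: matrix_vector_mul_assoc XG)
    also have "\<dots> = \<alpha> *s (G *v x)" using x unfolding W_def by (simp add: vector_scalar_commute)
    finally show "G *v x \<in> W" using x G_inv unfolding W_def by auto
  qed
  have v1W: "v1 \<in> W" using v1 unfolding W_def by auto
  obtain v \<beta> where v: "v \<in> W" "v \<noteq> 0" "G *v v = \<beta> *s v"
    using eig_exists[OF alg_closed W_sub W_inv v1W v1(2)] by blast
  have vX: "X *v v = \<alpha> *s v" and vU: "v \<in> U" using v(1) unfolding W_def by auto
  have XiX: "Xi ** X = mat 1" using Hm unfolding H_module_def by auto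
  have a0: "\<alpha> \<noteq> 0"
  proof
    assume "\<alpha> = 0"
    have "v = (Xi ** X) *v v" using XiX by simp
    also have "\<dots> = Xi *v (\<alpha> *s v)" by (simp add: matrix_vector_mul_assoc[symmetric] vX)
    finally show False using \<open>\<alpha> = 0\<close> v(2) by simp
  qed
  have "\<beta> ^ n *s v = \<alpha> ^ w *s v"
    using mpow_eig[OF v(3), of n] mpow_eig[OF vX, of w] GX by metis
  then have "\<beta> ^ n = \<alpha> ^ w" using v(2) vec.scale_right_imp_eq by blast
  then have b0: "\<beta> \<noteq> 0" using a0 n by (metis power_0_left power_not_zero not_gr0)
  have "standard_element n X G D v"
    unfolding standard_element_def
    using v(2) a0 b0 jh vX v(3) vU h' unfolding U_def by blast
  then show ?thesis by blast
qed


end
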